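(* Let $M_1,M_2\in\mathcal{G}$ be such that $C_{M_1}$, $C_{M_2}$ and $C_{M_2^{-1}}$ are invertible. Then $$C_{M_1}^{-1}C_{M_1M_2}C_{M_2}^{-1}=\mathbb{1}-Z_{M_1}Z_{M_2^{-1}}.$$
   Context: Bosonic case: $\mathcal{G}=\mathrm{Sp}(2N,\mathbb{R})$, $J$ a complex structure compatible with the standard symplectic form ($J^2=-\mathbb{1}$, $J\Omega J^\intercal=\Omega$, $-J\Omega>0$). Fermionic case: $\mathcal{G}=\mathrm{SO}(2N,\mathbb{R})$, $J$ orthogonal with $J^2=-\mathbb{1}$. For $M\in\mathcal{G}$: $C_M=\frac12(M-JMJ)$, $D_M=\frac12(M+JMJ)$, $Z_M=C_M^{-1}D_M$. *)

theory Defs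
  imports "HOL-Analysis.Analysis"
begin

type_synonym 'n mat2 = "real ^ ('n + 'n) ^ ('n + 'n)"

text \<open>Standard symplectic form on R^(2N), written in block form [[0, 1],[-1, 0]]
  with respect to the splitting R^(2N) = R^N x R^N (index type 'n + 'n).\<close>
definition Omega :: "'n::finite mat2" where
  "Omega = (\<chi> a b. case (a, b) of
      (Inl i, Inr j) \<Rightarrow> (if i = j then 1 else 0)
    | (Inr i, Inl j) \<Rightarrow> (if i = j then -1 else 0)
    | _ \<Rightarrow> 0)"

definition pos_def_mat :: "'n::finite mat2 \<Rightarrow> bool" where
  "pos_def_mat A \<longleftrightarrow> transpose A = A \<and> (\<forall>x. x \<noteq> 0 \<longrightarrow> x \<bullet> (A *v x) > 0)"

definition symplectic_group :: "'n::finite mat2 set" where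
  "symplectic_group = {M. M ** Omega ** transpose M = Omega}"

definition special_orthogonal_group :: "'n::finite mat2 set" where
  "special_orthogonal_group = {M. transpose M ** M = mat 1 \<and> det M = 1}"

definition bosonic_cs :: "'n::finite mat2 \<Rightarrow> bool" where
  "bosonic_cs J \<longleftrightarrow> J ** J = - mat 1 \<and> J ** Omega ** transpose J = Omega
     \<and> pos_def_mat (- (J ** Omega))"

definition fermionic_cs :: "'n::finite mat2 \<Rightarrow> bool" where
  "fermionic_cs J \<longleftrightarrow> transpose J ** J = mat 1 \<and> J ** J = - mat 1"

definition C_of :: "'n::finite mat2 \<Rightarrow> 'n mat2 \<Rightarrow> 'n mat2" where
  "C_of J M = (1/2) *\<^sub>R (M - J ** M ** J)"

definition D_of :: "'n::finite mat2 \<Rightarrow> 'n mat2 \<Rightarrow> 'n mat2" where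
  "D_of J M = (1/2) *\<^sub>R (M + J ** M ** J)"

definition Z_of :: "'n::finite mat2 \<Rightarrow> 'n mat2 \<Rightarrow> 'n mat2" where
  "Z_of J M = matrix_inv (C_of J M) ** D_of J M"

end

theory Submission imports Defs begin

lemma mm_diff_l: "(A::real^'m^'n) ** (B - C) = A ** B - A ** C"
  by (vector matrix_matrix_mult_def sum_subtractf[symmetric] field_simps)
lemma mm_diff_r: "((B::real^'m^'n) - C) ** A = B ** A - C ** A"
  by (vector matrix_matrix_mult_def sum_subtractf[symmetric] field_simps)
lemma mm_add_r: "((B::real^'m^'n) + C) ** A = B ** A + C ** A"
  by (vector matrix_matrix_mult_def sum.distrib[symmetric] field_simps)
lemma mm_neg_l: "(- (A::real^'m^'n)) ** B = - (A ** B)"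
  by (vector matrix_matrix_mult_def sum_negf[symmetric] field_simps)
lemma mm_neg_r: "(A::real^'m^'n) ** (- B) = - (A ** B)"
  by (vector matrix_matrix_mult_def sum_negf[symmetric] field_simps)
lemma mm_scale_r: "(A::real^'m^'n) ** (k *\<^sub>R B) = k *\<^sub>R (A ** B)"
  by (simp add: matrix_scalar_ac scalar_matrix_assoc)
lemma mm_scale_l: "(k *\<^sub>R (A::real^'m^'n)) ** B = k *\<^sub>R (A ** B)"
  by (simp add: scalar_matrix_assoc)

lemma minv: assumes "invertible (A::real^'n^'n)"
  shows "A ** matrix_inv A = mat 1" "matrix_inv A ** A = mat 1"
proof -
  have "\<exists>B. A ** B = mat 1 \<and> B ** A = mat 1" using assms by (simp add: invertible_def)
  from someI_ex[OF this] show "A ** matrix_inv A = mat 1" "matrix_inv A ** A = mat 1"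
    by (simp_all add: matrix_inv_def)
qed

lemma Omega_sq: "(Omega::'n::finite mat2) ** Omega = - mat 1"
proof -
  have "((Omega::'n::finite mat2) ** Omega) $ a $ c = (- mat 1 :: 'n mat2) $ a $ c" for a c
    unfolding matrix_matrix_mult_def Omega_def mat_def
    apply (simp add: UNIV_Plus_UNIV[symmetric] sum.Plus del: UNIV_Plus_UNIV)
    apply (cases a; cases c)
    apply (auto simp: if_distrib if_distribR sum.delta sum.delta' cong: if_cong)
    done
  then show ?thesis by (simp add: vec_eq_iff)
qed


lemma quarter2: "(1/4) *\<^sub>R ((X::real^'m^'n) * 2) = (1/2) *\<^sub>R X"
proof -
  have "(1/4) *\<^sub>R (X * 2) = (1/4) *\<^sub>R (X + X)" by (simp add: mult_2_right)
  also have "... = (1/4 + 1/4) *\<^sub>R X" by (simp only: scaleR_add_right scaleR_add_left)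
  finally show ?thesis by simp
qed

lemmas mmsimps = mm_diff_l mm_diff_r mm_add_r matrix_add_ldistrib mm_neg_l mm_neg_r
  mm_scale_r mm_scale_l matrix_mul_assoc[symmetric]

lemma C_mult:
  fixes J A B :: "'n::finite mat2"
  assumes JJ: "J ** J = - mat 1"
  shows "C_of J (A ** B) = C_of J A ** C_of J B + D_of J A ** D_of J B"
proof -
  have JJX: "J ** (J ** X) = - X" for X
    by (simp add: matrix_mul_assoc JJ mm_neg_l)
  show ?thesis
    unfolding C_of_def D_of_def
    by (simp add: mmsimps JJX algebra_simps quarter2)
qed

lemma D_mult:
  fixes J A B :: "'n::finite mat2"
  assumes JJ: "J ** J = - mat 1"
  shows "D_of J (A ** B) = C_of J A ** D_of J B + D_of J A ** C_of J B"
proof -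
  have JJX: "J ** (J ** X) = - X" for X
    by (simp add: matrix_mul_assoc JJ mm_neg_l)
  show ?thesis
    unfolding C_of_def D_of_def
    by (simp add: mmsimps JJX algebra_simps quarter2)
qed

lemma D_one:
  fixes J :: "'n::finite mat2"
  assumes JJ: "J ** J = - mat 1"
  shows "D_of J (mat 1) = 0"
  unfolding D_of_def using JJ by simp


theorem proposition1:
  fixes J M1 M2 :: "'n::finite mat2"
  assumes setting:
    "(bosonic_cs J \<and> M1 \<in> symplectic_group \<and> M2 \<in> symplectic_group) \<or>
     (fermionic_cs J \<and> M1 \<in> special_orthogonal_group \<and> M2 \<in> special_orthogonal_group)"
  assumes "invertible (C_of J M1)" and "invertible (C_of J M2)"
    and "invertible (C_of J (matrix_inv M2))"
  shows "matrix_inv (C_of J M1) ** C_of J (M1 ** M2) ** matrix_inv (C_of J M2)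
         = mat 1 - Z_of J M1 ** Z_of J (matrix_inv M2)"
proof -
  have JJ: "J ** J = - mat 1" and invM2: "invertible M2"
  proof -
    from setting show "J ** J = - mat 1"
      by (auto simp: bosonic_cs_def fermionic_cs_def)
    from setting show "invertible M2"
    proof
      assume "bosonic_cs J \<and> M1 \<in> symplectic_group \<and> M2 \<in> symplectic_group"
      then have S: "M2 ** Omega ** transpose M2 = Omega" by (simp add: symplectic_group_def)
      have "M2 ** (- (Omega ** transpose M2 ** Omega)) = - (M2 ** Omega ** transpose M2 ** Omega)"
        by (simp add: mm_neg_r matrix_mul_assoc)
      also have "... = mat 1" using S by (simp add: Omega_sq)
      finally show ?thesis using invertible_right_inverse by blast
    next
      assume "fermionic_cs J \<and> M1 \<in> special_orthogonal_group \<and> M2 \<in> special_orthogonal_group"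
      then have "transpose M2 ** M2 = mat 1" by (simp add: special_orthogonal_group_def)
      then show ?thesis using invertible_left_inverse by blast
    qed
  qed
  define C1 where "C1 = C_of J M1"
  define D1 where "D1 = D_of J M1"
  define C2 where "C2 = C_of J M2"
  define D2 where "D2 = D_of J M2"
  define C3 where "C3 = C_of J (matrix_inv M2)"
  define D3 where "D3 = D_of J (matrix_inv M2)"
  have i1: "matrix_inv C1 ** C1 = mat 1" using assms(2) minv unfolding C1_def by blast
  have i2: "C2 ** matrix_inv C2 = mat 1" using assms(3) minv unfolding C2_def by blast
  have i3: "matrix_inv C3 ** C3 = mat 1" using assms(4) minv unfolding C3_def by blast
  have hC: "C_of J (M1 ** M2) = C1 ** C2 + D1 ** D2"
    unfolding C1_def C2_def D1_def D2_def by (rule C_mult[OF JJ])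
  have h0: "C3 ** D2 + D3 ** C2 = 0"
    using D_mult[OF JJ, of "matrix_inv M2" M2] D_one[OF JJ] minv(2)[OF invM2]
    unfolding C3_def D2_def D3_def C2_def by simp
  have hD2: "D2 ** matrix_inv C2 = - (matrix_inv C3 ** D3)"
  proof -
    have "D2 ** matrix_inv C2 = matrix_inv C3 ** (C3 ** D2) ** matrix_inv C2"
      by (simp add: matrix_mul_assoc i3)
    also have "C3 ** D2 = - (D3 ** C2)" using h0 by (simp add: eq_neg_iff_add_eq_0)
    also have "matrix_inv C3 ** (- (D3 ** C2)) ** matrix_inv C2 = - (matrix_inv C3 ** D3 ** (C2 ** matrix_inv C2))"
      by (simp add: mm_neg_r mm_neg_l matrix_mul_assoc)
    finally show ?thesis by (simp add: i2)
  qed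
  have "matrix_inv C1 ** C_of J (M1 ** M2) ** matrix_inv C2
      = (matrix_inv C1 ** C1) ** (C2 ** matrix_inv C2) + matrix_inv C1 ** D1 ** (D2 ** matrix_inv C2)"
    unfolding hC by (simp add: matrix_add_ldistrib mm_add_r matrix_mul_assoc)
  also have "... = mat 1 - (matrix_inv C1 ** D1) ** (matrix_inv C3 ** D3)"
    by (simp add: i1 i2 hD2 mm_neg_r)
  finally show ?thesis unfolding Z_of_def C1_def D1_def C2_def C3_def D3_def .
qed

end
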